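(* For every $v\in\mathbb C$, in the ring of formal power series in $D$, \[ \Bigl(1-\tfrac{Y_{n-2}(v+4)}{Y_{n-1}(v+5)Y_n(v+5)}D^2\Bigr)\Bigl(1-\tfrac{Y_{n-1}(v+3)}{Y_n(v+5)}D^2\Bigr)\Bigl(1-\tfrac{Y_n(v+3)}{Y_n(v+7)}D^4\Bigr)^{-1}\Bigl(1-\tfrac{Y_n(v+3)}{Y_{n-1}(v+5)}D^2\Bigr)\Bigl(1-\tfrac{Y_{n-1}(v+3)Y_n(v+3)}{Y_{n-2}(v+4)}D^2\Bigr) \] \[ =1-\sum_{j\ge0}\Bigl(k_{n-1}(v+4j+5)h_n(v+3)+(1-\delta_{j0})k_n(v+4j+5)h_{n-1}(v+3)\Bigr)D^{4j+2} \] \[ \quad+\sum_{j\ge0}\Bigl(k_{n-1}(v+4j+7)h_{n-1}(v+3)+k_n(v+4j+7)h_n(v+3)-\delta_{j0}\tfrac{Y_{n-2}(v+4)}{Y_{n-2}(v+6)}\Bigr)D^{4j+4}. \]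
   Context: Fix $n\ge4$. Let $Q_a(u)$ ($1\le a\le n$, $u\in\mathbb C$) be algebraically independent commuting indeterminates and $Y_a(u)=Q_a(u-1)/Q_a(u+1)$, $\mathcal Y=\mathbb Z[Y_a(u)^{\pm1}]$. Formal power series $\sum_{j\ge0}c_j(u)D^j$ with $c_j(u)$ in the fraction field of $\mathcal Y$ are multiplied using $D\,c(u)=c(u+1)D$ (here all coefficients depend on the parameter $v$, and $D\,c(v)=c(v+1)D$); $(1-cD^4)^{-1}=\sum_{k\ge0}(cD^4)^k$. For $a\in\{n-1,n\}$: $h_a(u)=Y_a(u)+\frac{Y_{n-2}(u+1)}{Y_a(u+2)}$ and $k_a(u)=Y_a(u)^{-1}+\frac{Y_a(u-2)}{Y_{n-2}(u-1)}$. *)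

theory Defs
  imports Complex_Main
begin

text \<open>Formal power series in D whose coefficients are functions of the
parameter v, with the twisted rule D c(v) = c(v+1) D.
A series is represented by its coefficient map  n \<mapsto> (v \<mapsto> c_n(v)),
i.e. it stands for the sum over n of c_n(v) D^n.\<close>

type_synonym 'a dser = "nat \<Rightarrow> complex \<Rightarrow> 'a"

definition dmul :: "'a::comm_ring_1 dser \<Rightarrow> 'a dser \<Rightarrow> 'a dser" where
  "dmul a b = (\<lambda>n v. \<Sum>i\<le>n. a i v * b (n - i) (v + of_nat i))"

definition done_ser :: "'a::comm_ring_1 dser" where
  "done_ser = (\<lambda>n v. if n = 0 then 1 else 0)"

definition dsub :: "'a::comm_ring_1 dser \<Rightarrow> 'a dser \<Rightarrow> 'a dser" where
  "dsub a b = (\<lambda>n v. a n v - b n v)"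

definition dmono :: "(complex \<Rightarrow> 'a::comm_ring_1) \<Rightarrow> nat \<Rightarrow> 'a dser" where
  "dmono c m = (\<lambda>n v. if n = m then c v else 0)"

primrec dpow :: "'a::comm_ring_1 dser \<Rightarrow> nat \<Rightarrow> 'a dser" where
  "dpow a 0 = done_ser"
| "dpow a (Suc k) = dmul a (dpow a k)"

text \<open>(1 - c D^m)^{-1} := sum over k of (c D^m)^k  (for m \<ge> 1 the series
(c D^m)^k has order \<ge> k, so the coefficient of D^n only receives
contributions from k \<le> n).\<close>
definition dgeom :: "(complex \<Rightarrow> 'a::comm_ring_1) \<Rightarrow> nat \<Rightarrow> 'a dser" where
  "dgeom c m = (\<lambda>n v. \<Sum>k\<le>n. dpow (dmono c m) k n v)"

definition Yf :: "(nat \<Rightarrow> complex \<Rightarrow> 'a::field) \<Rightarrow> nat \<Rightarrow> complex \<Rightarrow> 'a" where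
  "Yf Q a u = Q a (u - 1) / Q a (u + 1)"

definition hf :: "(nat \<Rightarrow> complex \<Rightarrow> 'a::field) \<Rightarrow> nat \<Rightarrow> nat \<Rightarrow> complex \<Rightarrow> 'a" where
  "hf Q n a u = Yf Q a u + Yf Q (n - 2) (u + 1) / Yf Q a (u + 2)"

definition kf :: "(nat \<Rightarrow> complex \<Rightarrow> 'a::field) \<Rightarrow> nat \<Rightarrow> nat \<Rightarrow> complex \<Rightarrow> 'a" where
  "kf Q n a u = inverse (Yf Q a u) + Yf Q a (u - 2) / Yf Q (n - 2) (u - 1)"

end

theory Submission imports Defs begin

lemma dmul_mono_left:
  "dmul (dmono c m) x = (\<lambda>n v. if m \<le> n then c v * x (n-m) (v + of_nat m) else 0)"
  by (auto simp: dmul_def dmono_def fun_eq_iff if_distrib[of "\<lambda>t. t * _"] sum.delta cong: if_cong)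

lemma dmul_done_left: "dmul done_ser x = x"
  using dmul_mono_left[of "\<lambda>_. 1" 0 x] by (simp add: done_ser_def dmono_def fun_eq_iff)

lemma dmul_dsub_left: "dmul (dsub a b) x = dsub (dmul a x) (dmul b x)"
  by (simp add: dmul_def dsub_def fun_eq_iff algebra_simps sum_subtractf)

definition dadd :: "'a::comm_ring_1 dser \<Rightarrow> 'a dser \<Rightarrow> 'a dser" where
  "dadd a b = (\<lambda>n v. a n v + b n v)"

lemma dmul_dsub_right: "dmul x (dsub a b) = dsub (dmul x a) (dmul x b)"
  by (simp add: dmul_def dsub_def fun_eq_iff algebra_simps sum_subtractf)

lemma dmul_dadd_right: "dmul x (dadd a b) = dadd (dmul x a) (dmul x b)"
  by (simp add: dmul_def dadd_def fun_eq_iff algebra_simps sum.distrib)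

lemma dmul_mono_right:
  "dmul x (dmono c m) = (\<lambda>n v. if m \<le> n then x (n-m) v * c (v + of_nat (n-m)) else 0)"
proof (intro ext)
  fix n v
  have "dmul x (dmono c m) n v = (\<Sum>i\<le>n. if i = n - m \<and> m \<le> n then x i v * c (v + of_nat i) else 0)"
    unfolding dmul_def dmono_def
    by (intro sum.cong) auto
  also have "\<dots> = (if m \<le> n then x (n-m) v * c (v + of_nat (n-m)) else 0)"
    by (cases "m \<le> n") (simp_all add: sum.delta')
  finally show "dmul x (dmono c m) n v = (if m \<le> n then x (n-m) v * c (v + of_nat (n-m)) else 0)" .
qed

lemma dmul_done_right: "dmul x done_ser = x"
  using dmul_mono_right[of x "\<lambda>_. 1" 0] by (simp add: done_ser_def dmono_def fun_eq_iff)

lemma dpow_mono: "dpow (dmono c m) k = dmono (\<lambda>v. \<Prod>i<k. c (v + of_nat (m*i))) (m*k)"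
proof (induction k)
  case 0 then show ?case by (simp add: done_ser_def dmono_def)
next
  case (Suc k)
  show ?case
  proof (intro ext)
    fix n v
    have e: "(m \<le> n \<and> n - m = m*k) = (n = m * Suc k)" by auto
    have p: "c v * (\<Prod>i<k. c (v + of_nat m + of_nat (m*i))) = (\<Prod>i<Suc k. c (v + of_nat (m*i)))"
      by (subst prod.lessThan_Suc_shift) (simp add: add.assoc)
    show "dpow (dmono c m) (Suc k) n v = dmono (\<lambda>v. \<Prod>i<Suc k. c (v + of_nat (m*i))) (m * Suc k) n v"
    proof -
      have "dpow (dmono c m) (Suc k) n v = (if m \<le> n then c v * dmono (\<lambda>v. \<Prod>i<k. c (v + of_nat (m*i))) (m*k) (n-m) (v + of_nat m) else 0)"
        by (simp only: dpow.simps Suc.IH dmul_mono_left)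
      also have "\<dots> = (if n = m * Suc k then c v * (\<Prod>i<k. c (v + of_nat m + of_nat (m*i))) else 0)"
        unfolding dmono_def using e by (auto simp del: of_nat_mult)
      also have "\<dots> = dmono (\<lambda>v. \<Prod>i<Suc k. c (v + of_nat (m*i))) (m * Suc k) n v"
        unfolding dmono_def p by simp
      finally show ?thesis .
    qed
  qed
qed

lemma dgeom4: "dgeom c 4 n v = (if 4 dvd n then (\<Prod>i<n div 4. c (v + of_nat (4*i))) else 0)"
proof -
  have "dgeom c 4 n v = (\<Sum>k\<le>n. if k = n div 4 \<and> 4 dvd n then (\<Prod>i<k. c (v + of_nat (4*i))) else 0)"
    unfolding dgeom_def dpow_mono by (intro sum.cong) (auto simp: dmono_def)
  also have "\<dots> = (if 4 dvd n then (\<Prod>i<n div 4. c (v + of_nat (4*i))) else 0)"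
    by (cases "4 dvd n") (simp_all add: sum.delta')
  finally show ?thesis .
qed
lemma tele:
  fixes f :: "complex \<Rightarrow> 'a::field"
  assumes "\<And>u. f u \<noteq> 0"
  shows "(\<Prod>i<k. f (v + of_nat (4*i)) / f (v + of_nat (4*i) + 4)) = f v / f (v + of_nat (4*k))"
proof (induction k)
  case 0 then show ?case using assms by simp
next
  case (Suc k)
  have "(\<Prod>i<Suc k. f (v + of_nat (4*i)) / f (v + of_nat (4*i) + 4)) = f v / f (v + of_nat (4*k)) * (f (v + of_nat (4*k)) / f (v + of_nat (4*k) + 4))"
    by (simp only: prod.lessThan_Suc Suc.IH)
  also have "\<dots> = f v / f (v + of_nat (4*k) + 4)"
    using assms[of "v + of_nat (4*k)"] by simp
  finally show ?case by (simp add: algebra_simps)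
qed

lemma Yf_nz: "(\<And>u. Q a u \<noteq> 0) \<Longrightarrow> Yf Q a u \<noteq> 0"
  by (simp add: Yf_def)

lemma m_cases: "(\<And>r. r < (8::nat) \<Longrightarrow> m = r \<Longrightarrow> P) \<Longrightarrow> (\<And>j r. r < (4::nat) \<Longrightarrow> m = 4*j+8+r \<Longrightarrow> P) \<Longrightarrow> P"
proof -
  assume a: "\<And>r. r < (8::nat) \<Longrightarrow> m = r \<Longrightarrow> P" and b: "\<And>j r. r < (4::nat) \<Longrightarrow> m = 4*j+8+r \<Longrightarrow> P"
  show P
  proof (cases "m < 8")
    case True then show P using a by blast
  next
    case False
    then have "m = 4 * ((m - 8) div 4) + 8 + (m - 8) mod 4" by simp
    then show P using b[of "(m-8) mod 4" "(m - 8) div 4"] by simp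
  qed
qed

lemma dmulL: "dmul (dsub done_ser (dmono a 2)) X = (\<lambda>k u. X k u - (if 2 \<le> k then a u * X (k-2) (u+2) else 0))"
  by (simp only: dmul_dsub_left dmul_done_left dmul_mono_left) (simp add: dsub_def fun_eq_iff)

lemma dmulW: "dmul g (dadd (dsub done_ser (dmono w2 2)) (dmono w4 4)) = (\<lambda>k u. g k u - (if 2 \<le> k then g (k-2) u * w2 (u + of_nat (k-2)) else 0)
       + (if 4 \<le> k then g (k-4) u * w4 (u + of_nat (k-4)) else 0))"
  by (simp only: dmul_dadd_right dmul_dsub_right dmul_done_right dmul_mono_right) (simp add: dsub_def dadd_def)

theorem mainTheorem14:
  fixes Q :: "nat \<Rightarrow> complex \<Rightarrow> 'a::field" and n :: nat
  assumes "n \<ge> 4"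
    and "\<And>a u. 1 \<le> a \<Longrightarrow> a \<le> n \<Longrightarrow> Q a u \<noteq> 0"
  shows
   "dmul (dsub done_ser (dmono (\<lambda>v. Yf Q (n-2) (v+4) / (Yf Q (n-1) (v+5) * Yf Q n (v+5))) 2))
     (dmul (dsub done_ser (dmono (\<lambda>v. Yf Q (n-1) (v+3) / Yf Q n (v+5)) 2))
     (dmul (dgeom (\<lambda>v. Yf Q n (v+3) / Yf Q n (v+7)) 4)
     (dmul (dsub done_ser (dmono (\<lambda>v. Yf Q n (v+3) / Yf Q (n-1) (v+5)) 2))
           (dsub done_ser (dmono (\<lambda>v. Yf Q (n-1) (v+3) * Yf Q n (v+3) / Yf Q (n-2) (v+4)) 2)))))
    = (\<lambda>m v.
        if m = 0 then 1
        else if m mod 4 = 2 then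
          (let j = m div 4 in
            - (kf Q n (n-1) (v + of_nat (4*j+5)) * hf Q n n (v+3)
               + (if j = 0 then 0 else 1) * kf Q n n (v + of_nat (4*j+5)) * hf Q n (n-1) (v+3)))
        else if m mod 4 = 0 then
          (let j = m div 4 - 1 in
            kf Q n (n-1) (v + of_nat (4*j+7)) * hf Q n (n-1) (v+3)
            + kf Q n n (v + of_nat (4*j+7)) * hf Q n n (v+3)
            - (if j = 0 then 1 else 0) * (Yf Q (n-2) (v+4) / Yf Q (n-2) (v+6)))
        else 0)"
proof -
  have nzA: "\<And>u. Yf Q (n-2) u \<noteq> 0" using assms by (intro Yf_nz) auto
  have nzB: "\<And>u. Yf Q (n-1) u \<noteq> 0" using assms by (intro Yf_nz) auto
  have nzC: "\<And>u. Yf Q n u \<noteq> 0" using assms by (intro Yf_nz) auto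
  define A where "A = Yf Q (n-2)"
  define B where "B = Yf Q (n-1)"
  define C where "C = Yf Q n"
  have G: "dgeom (\<lambda>v. C (v+3) / C (v+7)) 4 = (\<lambda>m v. if 4 dvd m then C (v+3) / C (v + of_nat m + 3) else 0)"
  proof (intro ext)
    fix m v
    have "(\<Prod>i<m div 4. C (v + of_nat (4*i) + 3) / C (v + of_nat (4*i) + 7)) = (\<Prod>i<m div 4. C ((v+3) + of_nat (4*i)) / C ((v+3) + of_nat (4*i) + 4))"
      by (simp add: algebra_simps)
    also have "\<dots> = C (v+3) / C (v + 3 + of_nat (4*(m div 4)))"
      by (rule tele) (simp add: C_def nzC)
    finally show "dgeom (\<lambda>v. C (v+3) / C (v+7)) 4 m v = (if 4 dvd m then C (v+3) / C (v + of_nat m + 3) else 0)"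
      by (auto simp: dgeom4 algebra_simps)
  qed
  have W: "dmul (dsub done_ser (dmono (\<lambda>v. C (v+3) / B (v+5)) 2))
           (dsub done_ser (dmono (\<lambda>v. B (v+3) * C (v+3) / A (v+4)) 2)) =
    dadd (dsub done_ser (dmono (\<lambda>v. C (v+3) / B (v+5) + B (v+3) * C (v+3) / A (v+4)) 2))
       (dmono (\<lambda>v. C (v+3) / B (v+5) * (B (v+5) * C (v+5) / A (v+6))) 4)"
    apply (simp only: dmul_dsub_left dmul_done_left dmul_mono_left)
    apply (auto simp: fun_eq_iff dsub_def dadd_def dmono_def done_ser_def algebra_simps nzB[unfolded B_def[symmetric]])
    done
  have nA: "\<And>u. A u \<noteq> 0" unfolding A_def by (rule nzA)
  have nB: "\<And>u. B u \<noteq> 0" unfolding B_def by (rule nzB)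
  have nC: "\<And>u. C u \<noteq> 0" unfolding C_def by (rule nzC)
  define a where "a = (\<lambda>v. A (v+4) / (B (v+5) * C (v+5)))"
  define b where "b = (\<lambda>v. B (v+3) / C (v+5))"
  define w2 where "w2 = (\<lambda>v. C (v+3) / B (v+5) + B (v+3) * C (v+3) / A (v+4))"
  define w4 where "w4 = (\<lambda>v. C (v+3) / B (v+5) * (B (v+5) * C (v+5) / A (v+6)))"
  define g where "g = (\<lambda>m v. if 4 dvd m then C (v+3) / C (v + of_nat m + 3) else 0)"
  define X where "X = (\<lambda>k u. g k u - (if 2 \<le> k then g (k-2) u * w2 (u + of_nat (k-2)) else 0)
       + (if 4 \<le> k then g (k-4) u * w4 (u + of_nat (k-4)) else 0))"
  define kB where "kB = (\<lambda>u. inverse (B u) + B (u - 2) / A (u - 1))"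
  define kC where "kC = (\<lambda>u. inverse (C u) + C (u - 2) / A (u - 1))"
  define hB where "hB = (\<lambda>u. B u + A (u + 1) / B (u + 2))"
  define hC where "hC = (\<lambda>u. C u + A (u + 1) / C (u + 2))"
  have LHS: "dmul (dsub done_ser (dmono a 2)) (dmul (dsub done_ser (dmono b 2))
     (dmul g (dadd (dsub done_ser (dmono w2 2)) (dmono w4 4)))) m v =
     X m v - (if 2 \<le> m then b v * X (m-2) (v+2) else 0)
     - (if 2 \<le> m then a v * (X (m-2) (v+2) - (if 2 \<le> m - 2 then b (v+2) * X (m-2-2) (v+2+2) else 0)) else 0)" for m v
    unfolding dmulL dmulW X_def by simp
  have gen2: "X m v - (if 2 \<le> m then b v * X (m-2) (v+2) else 0)
     - (if 2 \<le> m then a v * (X (m-2) (v+2) - (if 2 \<le> m - 2 then b (v+2) * X (m-2-2) (v+2+2) else 0)) else 0)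
     = - (kB (v + of_nat m + 3) * hC (v+3) + kC (v + of_nat m + 3) * hB (v+3))"
    if "m mod 4 = 2" "m \<ge> 8" for m v
  proof -
    define t where "t = v + of_nat m"
    have dv: "4 dvd (m-2)" "\<not> 4 dvd m" "\<not> 4 dvd (m-4)" "4 dvd (m-6)" "\<not> 4 dvd (m-8)" "\<not> 4 dvd (m-2-2)" "4 dvd (m-2-2-2)" "4 dvd (m-2-4)"
       "\<not> 4 dvd (m-2-2-4)"
      using that by presburger+
    have x1: "X m v = - (C(v+3)/C(t+1)) * w2 (t-2)"
      using that dv unfolding X_def g_def t_def by (auto simp: of_nat_diff algebra_simps)
    have x2: "X (m-2) (v+2) = C(v+5)/C(t+3) + C(v+5)/C(t-1) * w4(t-4)"
      using that dv unfolding X_def g_def t_def by (auto simp: of_nat_diff algebra_simps)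
    have x3: "X (m-2-2) (v+2+2) = -(C(v+7)/C(t+1)) * w2(t-2)"
      using that dv unfolding X_def g_def t_def by (auto simp: of_nat_diff algebra_simps)
    have tt: "v + of_nat m + 3 = t + 3" by (simp add: t_def)
    have mm: "2 \<le> m" "2 \<le> m - 2" using that by auto
    show ?thesis
      using mm unfolding x1 x2 x3 tt
      by (simp add: a_def b_def w2_def w4_def kB_def kC_def hB_def hC_def field_simps nA nB nC)
  qed
  have gen0: "X m v - (if 2 \<le> m then b v * X (m-2) (v+2) else 0)
     - (if 2 \<le> m then a v * (X (m-2) (v+2) - (if 2 \<le> m - 2 then b (v+2) * X (m-2-2) (v+2+2) else 0)) else 0)
     = kB (v + of_nat m + 3) * hB (v+3) + kC (v + of_nat m + 3) * hC (v+3)"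
    if "m mod 4 = 0" "m \<ge> 8" for m v
  proof -
    define t where "t = v + of_nat m"
    have dv: "\<not> 4 dvd (m-2)" "4 dvd m" "4 dvd (m-4)" "\<not> 4 dvd (m-6)" "4 dvd (m-8)" "4 dvd (m-2-2)" "\<not> 4 dvd (m-2-2-2)" "\<not> 4 dvd (m-2-4)"
       "4 dvd (m-2-2-4)"
      using that by presburger+
    have x1: "X m v = C(v+3)/C(t+3) + C(v+3)/C(t-1) * w4 (t-4)"
      using that dv unfolding X_def g_def t_def by (auto simp: of_nat_diff algebra_simps)
    have x2: "X (m-2) (v+2) = - (C(v+5)/C(t+1)) * w2(t-2)"
      using that dv unfolding X_def g_def t_def by (auto simp: of_nat_diff algebra_simps)
    have x3: "X (m-2-2) (v+2+2) = C(v+7)/C(t+3) + C(v+7)/C(t-1) * w4(t-4)"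
      using that dv unfolding X_def g_def t_def by (auto simp: of_nat_diff algebra_simps)
    have tt: "v + of_nat m + 3 = t + 3" by (simp add: t_def)
    have mm: "2 \<le> m" "2 \<le> m - 2" using that by auto
    show ?thesis
      using mm unfolding x1 x2 x3 tt
      by (simp add: a_def b_def w2_def w4_def kB_def kC_def hB_def hC_def field_simps nA nB nC)
  qed
  have godd: "odd k \<Longrightarrow> X k u = 0" for k u
  proof -
    assume "odd k"
    then have "\<not> 4 dvd k" "2 \<le> k \<Longrightarrow> \<not> 4 dvd (k-2)" "4 \<le> k \<Longrightarrow> \<not> 4 dvd (k-4)" by presburger+
    then show ?thesis unfolding X_def g_def by auto
  qed
  have odd0: "X m v - (if 2 \<le> m then b v * X (m-2) (v+2) else 0)
     - (if 2 \<le> m then a v * (X (m-2) (v+2) - (if 2 \<le> m - 2 then b (v+2) * X (m-2-2) (v+2+2) else 0)) else 0)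
     = 0" if "odd m" for m v
  proof -
    have "2 \<le> m \<Longrightarrow> odd (m-2)" "2 \<le> m - 2 \<Longrightarrow> odd (m-2-2)" using that by presburger+
    then show ?thesis using that by (simp add: godd)
  qed
  have s0: "X 0 v = 1" for v
    by (simp add: X_def g_def nC)
  have s2: "X 2 v - b v * X 0 (v+2) - a v * X 0 (v+2) = - (kB (v + 5) * hC (v+3))" for v
    by (simp add: X_def g_def a_def b_def w2_def w4_def kB_def kC_def hB_def hC_def field_simps nA nB nC)
  have s4: "X 4 v - b v * X 2 (v+2) - a v * (X 2 (v+2) - b (v+2) * X 0 (v+2+2))
     = kB (v+7) * hB (v+3) + kC (v+7) * hC (v+3) - A (v+4) / A (v+6)" for v
    by (simp add: X_def g_def a_def b_def w2_def w4_def kB_def kC_def hB_def hC_def field_simps nA nB nC)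
  have s6: "X 6 v - b v * X 4 (v+2) - a v * (X 4 (v+2) - b (v+2) * X 2 (v+2+2))
     = - (kB (v + 9) * hC (v+3) + kC (v + 9) * hB (v+3))" for v
    by (simp add: X_def g_def a_def b_def w2_def w4_def kB_def kC_def hB_def hC_def field_simps nA nB nC)
  have final: "(X m v - (if 2 \<le> m then b v * X (m-2) (v+2) else 0)
     - (if 2 \<le> m then a v * (X (m-2) (v+2) - (if 2 \<le> m - 2 then b (v+2) * X (m-2-2) (v+2+2) else 0)) else 0)) = (if m = 0 then 1
        else if m mod 4 = 2 then
          (let j = m div 4 in
            - (kB (v + of_nat (4*j+5)) * hC (v+3)
               + (if j = 0 then 0 else 1) * kC (v + of_nat (4*j+5)) * hB (v+3)))
        else if m mod 4 = 0 then
          (let j = m div 4 - 1 in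
            kB (v + of_nat (4*j+7)) * hB (v+3)
            + kC (v + of_nat (4*j+7)) * hC (v+3)
            - (if j = 0 then 1 else 0) * (A (v+4) / A (v+6)))
        else 0)" for m v
  proof -
    have "m = 0 \<or> odd m \<or> m = 2 \<or> m = 6 \<or> (m mod 4 = 2 \<and> m \<ge> 8) \<or> m = 4 \<or> (m mod 4 = 0 \<and> m \<ge> 8)"
      by presburger
    then consider "m = 0" | "odd m" | "m = 2" | "m = 6" | "m mod 4 = 2" "m \<ge> 8" | "m = 4" | "m mod 4 = 0" "m \<ge> 8"
      by (elim disjE conjE) simp_all
    then show ?thesis
    proof cases
      case 1 then show ?thesis by (simp add: s0)
    next
      case 2
      then have "m mod 4 \<noteq> 0" "m mod 4 \<noteq> 2" "m \<noteq> 0" by presburger+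
      then show ?thesis using odd0[OF 2, of v] by simp
    next
      case 3 then show ?thesis using s2[of v] by simp
    next
      case 4 then show ?thesis using s6[of v] by simp
    next
      case 5
      then have j: "4 * (m div 4) + 5 = m + 3" "m \<noteq> 0" "m div 4 \<noteq> 0" by presburger+
      have c: "v + of_nat (4 * (m div 4) + 5) = v + of_nat m + 3" unfolding j(1) by simp
      show ?thesis unfolding Let_def c using gen2[OF 5, of v] 5 j by simp
    next
      case 6 then show ?thesis using s4[of v] by simp
    next
      case 7
      then have j: "4 * (m div 4 - 1) + 7 = m + 3" "m \<noteq> 0" "m div 4 - 1 \<noteq> 0" "m mod 4 \<noteq> 2" by presburger+
      have c: "v + of_nat (4 * (m div 4 - 1) + 7) = v + of_nat m + 3" unfolding j(1) by simp
      show ?thesis unfolding Let_def c using gen0[OF 7, of v] 7 j by simp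
    qed
  qed
  have kfB: "kf Q n (n-1) = kB" by (simp add: fun_eq_iff kf_def kB_def A_def B_def)
  have kfC: "kf Q n n = kC" by (simp add: fun_eq_iff kf_def kC_def A_def C_def)
  have hfB: "hf Q n (n-1) = hB" by (simp add: fun_eq_iff hf_def hB_def A_def B_def)
  have hfC: "hf Q n n = hC" by (simp add: fun_eq_iff hf_def hC_def A_def C_def)
  have LHSf: "dmul (dsub done_ser (dmono a 2)) (dmul (dsub done_ser (dmono b 2))
     (dmul g (dadd (dsub done_ser (dmono w2 2)) (dmono w4 4)))) = (\<lambda>m v. (X m v - (if 2 \<le> m then b v * X (m-2) (v+2) else 0)
     - (if 2 \<le> m then a v * (X (m-2) (v+2) - (if 2 \<le> m - 2 then b (v+2) * X (m-2-2) (v+2+2) else 0)) else 0)))"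
    by (intro ext) (rule LHS)
  show ?thesis
    unfolding kfB kfC hfB hfC
    unfolding A_def[symmetric] B_def[symmetric] C_def[symmetric] W G
    unfolding a_def[symmetric] b_def[symmetric] w2_def[symmetric] w4_def[symmetric] g_def[symmetric] LHSf
    by (intro ext) (rule final)
qed
end
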